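(* Let $f:\mathbb{S}^1\to\mathbb{S}^1$ be an orientation-preserving homeomorphism with rational Poincaré rotation number which is not topologically conjugate to a rotation. Then $h_{\mathrm{pol}}(C(f))\ge 2$.
   Context: $C(\mathbb{S}^1)$ is the set of all nonempty closed connected subsets of $\mathbb{S}^1$ with the Hausdorff metric $d_H(A,B)=\inf\{\varepsilon>0: A\subset U(B,\varepsilon),\ B\subset U(A,\varepsilon)\}$, $U(A,\varepsilon)=\{x: d(x,A)<\varepsilon\}$; $C(f)(A)=f(A)$. For a continuous map $g:Z\to Z$ of a compact metric space $(Z,\rho)$, define $\rho^g_n(x,y)=\max_{0\le k\le n-1}\rho(g^k(x),g^k(y))$; a finite set $E\subset Z$ is $(n,\varepsilon)$-separated if $\rho^g_n(x,y)\ge\varepsilon$ for all distinct $x,y\in E$; $\mathrm{sep}(n,\varepsilon)$ is the maximal cardinality of such a set; and $h_{\mathrm{pol}}(g)=\lim_{\varepsilon\to0}\limsup_{n\to\infty}\frac{\log \mathrm{sep}(n,\varepsilon)}{\log n}$. *)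

theory Defs
  imports "HOL-Analysis.Analysis"
begin

definition circle :: "complex set" where
  "circle = sphere 0 1"

definition is_lift :: "(real \<Rightarrow> real) \<Rightarrow> (complex \<Rightarrow> complex) \<Rightarrow> bool" where
  "is_lift F f \<longleftrightarrow> continuous_on UNIV F \<and> (\<forall>t. F (t + 1) = F t + 1) \<and>
     (\<forall>t. f (cis (2 * pi * t)) = cis (2 * pi * F t))"

definition orient_pres_homeo :: "(complex \<Rightarrow> complex) \<Rightarrow> bool" where
  "orient_pres_homeo f \<longleftrightarrow> (\<exists>g. homeomorphism circle circle f g) \<and>
     (\<exists>F. is_lift F f \<and> strict_mono F)"

definition rational_rotation_number :: "(complex \<Rightarrow> complex) \<Rightarrow> bool" where
  "rational_rotation_number f \<longleftrightarrow>
     (\<exists>F r. is_lift F f \<and> strict_mono F \<and> ((\<lambda>n. (F ^^ n) 0 / real n) \<longlonglongrightarrow> r) \<and> r \<in> \<rat>)"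

definition conj_to_rotation :: "(complex \<Rightarrow> complex) \<Rightarrow> bool" where
  "conj_to_rotation f \<longleftrightarrow> (\<exists>h h' \<alpha>. homeomorphism circle circle h h' \<and>
     (\<forall>z\<in>circle. h (f z) = cis (2 * pi * \<alpha>) * h z))"

definition C_circle :: "complex set set" where
  "C_circle = {A. A \<subseteq> circle \<and> A \<noteq> {} \<and> closed A \<and> connected A}"

definition nbhd :: "complex set \<Rightarrow> real \<Rightarrow> complex set" where
  "nbhd A \<epsilon> = {x. infdist x A < \<epsilon>}"

definition hausdorff_dist :: "complex set \<Rightarrow> complex set \<Rightarrow> real" where
  "hausdorff_dist A B = Inf {\<epsilon>. \<epsilon> > 0 \<and> A \<subseteq> nbhd B \<epsilon> \<and> B \<subseteq> nbhd A \<epsilon>}"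

definition induced_map :: "(complex \<Rightarrow> complex) \<Rightarrow> complex set \<Rightarrow> complex set" where
  "induced_map f A = f ` A"

definition dyn_dist :: "('a \<Rightarrow> 'a \<Rightarrow> real) \<Rightarrow> ('a \<Rightarrow> 'a) \<Rightarrow> nat \<Rightarrow> 'a \<Rightarrow> 'a \<Rightarrow> real" where
  "dyn_dist \<rho> g n x y = (MAX k\<in>{..<n}. \<rho> ((g ^^ k) x) ((g ^^ k) y))"

definition separated_set :: "'a set \<Rightarrow> ('a \<Rightarrow> 'a \<Rightarrow> real) \<Rightarrow> ('a \<Rightarrow> 'a) \<Rightarrow> nat \<Rightarrow> real \<Rightarrow> 'a set \<Rightarrow> bool" where
  "separated_set Z \<rho> g n \<epsilon> E \<longleftrightarrow> E \<subseteq> Z \<and> finite E \<and>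
     (\<forall>x\<in>E. \<forall>y\<in>E. x \<noteq> y \<longrightarrow> dyn_dist \<rho> g n x y \<ge> \<epsilon>)"

definition sep :: "'a set \<Rightarrow> ('a \<Rightarrow> 'a \<Rightarrow> real) \<Rightarrow> ('a \<Rightarrow> 'a) \<Rightarrow> nat \<Rightarrow> real \<Rightarrow> nat" where
  "sep Z \<rho> g n \<epsilon> = Sup {card E | E. separated_set Z \<rho> g n \<epsilon> E}"

definition pol_entropy :: "'a set \<Rightarrow> ('a \<Rightarrow> 'a \<Rightarrow> real) \<Rightarrow> ('a \<Rightarrow> 'a) \<Rightarrow> ereal" where
  "pol_entropy Z \<rho> g = Lim (at_right 0)
     (\<lambda>\<epsilon>. limsup (\<lambda>n. ereal (ln (real (sep Z \<rho> g n \<epsilon>)) / ln (real n))))"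

end

theory Submission
  imports Defs
begin

definition pp :: "real \<Rightarrow> complex" where "pp t = cis (2 * pi * t)"

lemma pp_circle: "pp t \<in> circle"
  by (simp add: pp_def circle_def)

lemma pp_int: "pp (t + of_int k) = pp t"
proof -
  have "cis (2 * pi * (t + of_int k)) = cis (2 * pi * t) * cis (2 * pi * of_int k)"
    by (simp add: cis_mult algebra_simps)
  moreover have "cis (2 * pi * of_int k) = 1"
    by (rule cis_multiple_2pi) simp
  ultimately show ?thesis by (simp add: pp_def)
qed

lemma pp_eq: "pp s = pp t \<Longrightarrow> \<exists>k::int. s = t + of_int k"
proof -
  assume "pp s = pp t"
  then have "exp (\<i> * of_real (2 * pi * s)) = exp (\<i> * of_real (2 * pi * t))"
    by (simp add: pp_def cis_conv_exp)
  then obtain n::int where "\<i> * of_real (2 * pi * s) = \<i> * of_real (2 * pi * t) + (of_int (2 * n) * pi) * \<i>"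
    using exp_eq by blast
  then have "\<i> * of_real (2 * pi * s) = \<i> * of_real (2 * pi * t + of_int (2 * n) * pi)"
    by (simp add: algebra_simps)
  then have "complex_of_real (2 * pi * s) = of_real (2 * pi * t + of_int (2 * n) * pi)"
    by simp
  then have "2 * pi * s = 2 * pi * t + of_int (2 * n) * pi" using of_real_eq_iff by blast
  then have "pi * (2 * s) = pi * (2 * t + 2 * of_int n)" by (simp add: algebra_simps)
  then have "s = t + of_int n" by simp
  then show ?thesis by blast
qed

lemma circle_pp: "z \<in> circle \<Longrightarrow> \<exists>t. a \<le> t \<and> t \<le> a + 1 \<and> z = pp t"
proof -
  assume "z \<in> circle"
  then have "norm z = 1" by (simp add: circle_def)
  then have z: "z = pp (Arg2pi z / (2 * pi))"
    using complex_norm_eq_1_exp by (simp add: pp_def cis_conv_exp)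
  define s where "s = Arg2pi z / (2 * pi)"
  define k where "k = \<lceil>a - s\<rceil>"
  have "a \<le> s + of_int k" "s + of_int k \<le> a + 1" unfolding k_def by linarith+
  moreover have "z = pp (s + of_int k)" using z by (simp add: pp_int s_def)
  ultimately show ?thesis by blast
qed

lemma norm_cis_1: "cmod (cis x - 1) = 2 * \<bar>sin (x / 2)\<bar>"
proof -
  have "(cmod (cis x - 1))^2 = (cos x - 1)^2 + (sin x)^2"
    by (simp add: cmod_def)
  also have "\<dots> = 2 - 2 * cos x" by (simp add: power2_diff sin_squared_eq)
  also have "cos x = 1 - 2 * (sin (x/2))^2" using cos_double_sin[of "x/2"] by simp
  finally have "(cmod (cis x - 1))^2 = (2 * \<bar>sin (x / 2)\<bar>)^2" by (simp add: power_mult_distrib)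
  then show ?thesis
    by (metis abs_of_nonneg norm_ge_zero power2_eq_imp_eq abs_ge_zero mult_nonneg_nonneg zero_le_numeral)
qed

lemma dist_pp: "dist (pp s) (pp t) = 2 * \<bar>sin (pi * (s - t))\<bar>"
proof -
  have "pp s - pp t = cis (2 * pi * t) * (cis (2 * pi * (s - t)) - 1)"
    by (simp add: pp_def cis_mult algebra_simps)
  then have "dist (pp s) (pp t) = cmod (cis (2 * pi * (s - t)) - 1)"
    by (simp add: dist_norm norm_mult)
  then show ?thesis by (simp add: norm_cis_1)
qed


definition good :: "(real \<Rightarrow> real) \<Rightarrow> bool" where
  "good F \<longleftrightarrow> continuous_on UNIV F \<and> strict_mono F \<and> (\<forall>t. F (t + 1) = F t + 1)"

lemma good_nat: "good F \<Longrightarrow> F (t + real k) = F t + real k"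
  by (induction k arbitrary: t) (auto simp: good_def add.assoc[symmetric] simp del: add.assoc)

lemma good_int: "good F \<Longrightarrow> F (t + of_int k) = F t + of_int k"
proof (cases "k \<ge> 0")
  case True
  assume "good F"
  then show ?thesis using good_nat[of F t "nat k"] True by simp
next
  case False
  assume g: "good F"
  have "F ((t + of_int k) + real (nat (- k))) = F (t + of_int k) + real (nat (-k))"
    by (rule good_nat[OF g])
  then show ?thesis using False by simp
qed

lemma good_funpow: "good F \<Longrightarrow> good (F ^^ k)"
proof (induction k)
  case 0
  then show ?case by (simp add: good_def strict_mono_def)
next
  case (Suc k)
  then have a: "good (F ^^ k)" by simp
  have "continuous_on UNIV (F \<circ> (F ^^ k))"
    using a Suc.prems unfolding good_def
    by (metis continuous_on_compose continuous_on_subset subset_UNIV)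
  moreover have "strict_mono (F \<circ> (F ^^ k))"
    using a Suc.prems unfolding good_def by (simp add: strict_mono_def)
  ultimately show ?case using a Suc.prems by (simp add: good_def o_def)
qed

lemma good_shift: "good F \<Longrightarrow> good (\<lambda>t. F t - c)"
  unfolding good_def strict_mono_def
  by (auto intro!: continuous_intros)

lemma lift_pp: "is_lift F f \<Longrightarrow> f (pp t) = pp (F t)"
  by (simp add: is_lift_def pp_def)

lemma lift_pp_funpow: "(\<And>t. f (pp t) = pp (F t)) \<Longrightarrow> (f ^^ k) (pp t) = pp ((F ^^ k) t)"
  by (induction k) auto

lemma good_surj: assumes "good F" shows "\<exists>t. F t = y"
proof -
  define k where "k = \<lceil>\<bar>F y - y\<bar>\<rceil>"
  have c: "continuous_on {y - of_int k..y + of_int k} F" using assms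
    by (metis good_def continuous_on_subset subset_UNIV)
  have "F (y - of_int k) = F y - of_int k" using good_int[OF assms, of y "-k"] by simp
  moreover have "F (y + of_int k) = F y + of_int k" using good_int[OF assms] by simp
  moreover have "\<bar>F y - y\<bar> \<le> of_int k" unfolding k_def by linarith
  ultimately have "F (y - of_int k) \<le> y" "y \<le> F (y + of_int k)" "y - of_int k \<le> y + of_int k"
    by (auto simp: abs_le_iff)
  then show ?thesis using IVT'[OF _ _ _ c] by blast
qed



lemma conj_from_periodic:
  fixes f :: "complex \<Rightarrow> complex" and F :: "real \<Rightarrow> real" and p :: int
  assumes lift: "is_lift F f" and gF: "good F" and q: "q > 0"
    and per: "\<And>t. (F ^^ q) t = t + of_int p"
  shows "conj_to_rotation f"
proof -
  define H where "H t = (\<Sum>k<q. (F ^^ k) t - real k * of_int p / real q) / real q" for t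
  have gk: "good (F ^^ k)" for k using good_funpow[OF gF] .
  have Hcont: "continuous_on UNIV H"
    unfolding H_def using gk q unfolding good_def
    by (intro continuous_intros) auto
  have Hmono: "strict_mono H"
  proof (rule strict_monoI)
    fix s t :: real assume "s < t"
    then have "(F ^^ k) s < (F ^^ k) t" for k using gk[of k] unfolding good_def strict_mono_def by blast
    then have "(\<Sum>k<q. (F ^^ k) s - real k * of_int p / real q) < (\<Sum>k<q. (F ^^ k) t - real k * of_int p / real q)"
      using q by (intro sum_strict_mono) auto
    then show "H s < H t" unfolding H_def using q by (simp add: divide_strict_right_mono)
  qed
  have H1: "H (t + 1) = H t + 1" for t
  proof -
    have "(\<Sum>k<q. (F ^^ k) (t + 1) - real k * of_int p / real q) = (\<Sum>k<q. (F ^^ k) t - real k * of_int p / real q) + real q"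
    proof -
      have "(F ^^ k) (t + 1) = (F ^^ k) t + 1" for k using gk[of k] unfolding good_def by blast
      then have "(\<Sum>k<q. (F ^^ k) (t + 1) - real k * of_int p / real q) = (\<Sum>k<q. ((F ^^ k) t - real k * of_int p / real q) + 1)"
        by (simp add: algebra_simps)
      then show ?thesis by (simp add: sum.distrib)
    qed
    then show ?thesis unfolding H_def using q by (simp add: add_divide_distrib)
  qed
  have gH: "good H" using Hcont Hmono H1 by (simp add: good_def)
  have HF: "H (F t) = H t + of_int p / real q" for t
  proof -
    have "(\<Sum>k<q. (F ^^ k) (F t)) = (\<Sum>k<q. (F ^^ Suc k) t)"
      by (simp add: funpow_swap1)
    also have "\<dots> = (\<Sum>k<Suc q. (F ^^ k) t) - t"
      using sum.lessThan_Suc_shift[of "\<lambda>k. (F ^^ k) t" q] by (simp del: sum.lessThan_Suc funpow.simps)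
    also have "\<dots> = (\<Sum>k<q. (F ^^ k) t) + of_int p"
      using per by simp
    finally have e1: "(\<Sum>k<q. (F ^^ k) (F t)) = (\<Sum>k<q. (F ^^ k) t) + of_int p" .
    have "(\<Sum>k<q. (F ^^ k) (F t) - real k * of_int p / real q) = (\<Sum>k<q. (F ^^ k) (F t)) - (\<Sum>k<q. real k * of_int p / real q)"
      by (simp add: sum_subtractf)
    also have "\<dots> = (\<Sum>k<q. (F ^^ k) t - real k * of_int p / real q) + of_int p"
      by (simp add: e1 sum_subtractf)
    finally show ?thesis unfolding H_def using q by (simp add: add_divide_distrib)
  qed
  define h where "h z = pp (H (Arg2pi z / (2 * pi)))" for z
  have hpp: "h (pp t) = pp (H t)" for t
  proof -
    have "norm (pp t) = 1" using pp_circle[of t] by (simp add: circle_def)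
    then have "pp t = pp (Arg2pi (pp t) / (2 * pi))"
      using complex_norm_eq_1_exp[of "pp t"] by (simp add: pp_def cis_conv_exp)
    then obtain k where "Arg2pi (pp t) / (2 * pi) = t + of_int k" using pp_eq by metis
    then show ?thesis unfolding h_def using good_int[OF gH] pp_int by simp
  qed
  have hf: "h (f z) = cis (2 * pi * (of_int p / real q)) * h z" if zc: "z \<in> circle" for z
  proof -
    obtain t where z: "z = pp t" using circle_pp[OF zc] by blast
    have "h (f z) = pp (H (F t))" using z lift_pp[OF lift] hpp by simp
    also have "\<dots> = cis (2 * pi * (of_int p / real q)) * pp (H t)"
      by (simp add: HF pp_def cis_mult algebra_simps)
    finally show ?thesis using z hpp by simp
  qed
  have comp: "compact circle" by (simp add: circle_def)
  have himg: "h ` circle = circle"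
  proof
    show "h ` circle \<subseteq> circle"
      using circle_pp hpp pp_circle by (force)
    show "circle \<subseteq> h ` circle"
    proof
      fix w assume "w \<in> circle"
      then obtain s where s: "H 0 \<le> s" "s \<le> H 0 + 1" "w = pp s" using circle_pp by blast
      have c: "continuous_on {0..1} H" using Hcont continuous_on_subset by blast
      have "H 1 = H 0 + 1" using H1[of 0] by simp
      then obtain t where "H t = s" using IVT'[OF _ _ _ c, of s] s by auto
      then show "w \<in> h ` circle" using s hpp pp_circle by (metis image_eqI)
    qed
  qed
  have hinj: "inj_on h circle"
  proof
    fix z w assume z: "z \<in> circle" and w: "w \<in> circle" and e: "h z = h w"
    obtain s where s: "z = pp s" using circle_pp[OF z] by blast
    obtain t where t: "w = pp t" using circle_pp[OF w] by blast
    have "pp (H s) = pp (H t)" using e s t hpp by simp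
    then obtain k where "H s = H t + of_int k" using pp_eq by blast
    then have "H s = H (t + of_int k)" using good_int[OF gH] by simp
    then have "s = t + of_int k" using Hmono strict_mono_eq by metis
    then show "z = w" using s t pp_int by simp
  qed
  have hcont: "continuous_on circle h"
  proof (rule continuous_from_closed_graph[OF comp])
    show "h \<in> circle \<rightarrow> circle" using himg by blast
    have eq: "(\<lambda>x. (x, h x)) ` circle = (\<lambda>t. (pp t, pp (H t))) ` {0..1}"
    proof
      show "(\<lambda>x. (x, h x)) ` circle \<subseteq> (\<lambda>t. (pp t, pp (H t))) ` {0..1}"
      proof
        fix y assume "y \<in> (\<lambda>x. (x, h x)) ` circle"
        then obtain z where z: "z \<in> circle" "y = (z, h z)" by blast
        obtain t where "0 \<le> t" "t \<le> 1" "z = pp t" using circle_pp[OF z(1), of 0] by auto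
        then show "y \<in> (\<lambda>t. (pp t, pp (H t))) ` {0..1}" using z hpp by auto
      qed
      show "(\<lambda>t. (pp t, pp (H t))) ` {0..1} \<subseteq> (\<lambda>x. (x, h x)) ` circle"
        using hpp pp_circle by auto
    qed
    have cpp: "continuous_on UNIV pp" unfolding pp_def by (intro continuous_intros)
    have "continuous_on {0..1} (\<lambda>t. (pp t, pp (H t)))"
      using cpp Hcont
      by (intro continuous_intros continuous_on_compose2[OF cpp] continuous_on_subset[OF Hcont]) auto
    then have "compact ((\<lambda>t. (pp t, pp (H t))) ` {0..1})"
      by (intro compact_continuous_image) auto
    then show "closed ((\<lambda>x. (x, h x)) ` circle)" unfolding eq by (rule compact_imp_closed)
  qed
  obtain h' where "homeomorphism circle circle h h'"
    using homeomorphism_compact[OF comp hcont himg hinj] by blast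
  then show ?thesis unfolding conj_to_rotation_def using hf by blast
qed



lemma Gpow:
  assumes gF: "good F"
  shows "((\<lambda>t. (F ^^ q) t - of_int p) ^^ m) t = (F ^^ (q * m)) t - real m * of_int p"
proof (induction m arbitrary: t)
  case 0
  then show ?case by simp
next
  case (Suc m)
  have g: "good (F ^^ q)" using good_funpow[OF gF] .
  have "((\<lambda>t. (F ^^ q) t - of_int p) ^^ Suc m) t = (F ^^ q) ((F ^^ (q * m)) t - real m * of_int p) - of_int p"
    using Suc by simp
  also have "\<dots> = (F ^^ q) ((F ^^ (q * m)) t) - real m * of_int p - of_int p"
    using good_int[OF g, of "(F ^^ (q * m)) t" "- (int m * p)"] by simp
  also have "(F ^^ q) ((F ^^ (q * m)) t) = (F ^^ (q * Suc m)) t"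
    by (simp add: funpow_add)
  finally show ?case by (simp add: algebra_simps)
qed

lemma no_fixed_pos:
  assumes gG: "good G" and lim: "(\<lambda>m. (G ^^ m) 0 / real m) \<longlonglongrightarrow> 0"
    and c: "c > 0" and pos: "\<And>t. G t - t \<ge> c"
  shows False
proof -
  have "(G ^^ m) 0 \<ge> real m * c" for m
  proof (induction m)
    case (Suc m)
    then show ?case using pos[of "(G ^^ m) 0"] by (simp add: algebra_simps)
  qed simp
  then have "\<forall>m\<ge>1. c \<le> (G ^^ m) 0 / real m" by (simp add: field_simps)
  then have "c \<le> 0" using LIMSEQ_le_const[OF lim] by blast
  then show False using c by simp
qed

lemma no_fixed_neg:
  assumes gG: "good G" and lim: "(\<lambda>m. (G ^^ m) 0 / real m) \<longlonglongrightarrow> 0"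
    and c: "c > 0" and neg: "\<And>t. t - G t \<ge> c"
  shows False
proof -
  have "(G ^^ m) 0 \<le> - real m * c" for m
  proof (induction m)
    case (Suc m)
    then show ?case using neg[of "(G ^^ m) 0"] by (simp add: algebra_simps)
  qed simp
  then have "\<forall>m\<ge>1. (G ^^ m) 0 / real m \<le> -c" by (simp add: field_simps)
  then have "0 \<le> -c" using LIMSEQ_le_const2[OF lim] by blast
  then show False using c by simp
qed

lemma good_fixed:
  assumes gG: "good G" and lim: "(\<lambda>m. (G ^^ m) 0 / real m) \<longlonglongrightarrow> 0"
  shows "\<exists>s. G s = s"
proof (rule ccontr)
  assume nf: "\<nexists>s. G s = s"
  define \<phi> where "\<phi> t = G t - t" for t
  have cont: "continuous_on UNIV \<phi>" unfolding \<phi>_def using gG unfolding good_def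
    by (intro continuous_intros) auto
  have per: "\<phi> (t + of_int k) = \<phi> t" for t k unfolding \<phi>_def using good_int[OF gG] by simp
  have nz: "\<phi> t \<noteq> 0" for t using nf unfolding \<phi>_def by auto
  obtain x where x: "x \<in> {0..1}" "\<forall>y\<in>{0..1}. \<phi> x \<le> \<phi> y"
    using continuous_attains_inf[of "{0..1}" \<phi>] continuous_on_subset[OF cont] by auto
  obtain z where z: "z \<in> {0..1}" "\<forall>y\<in>{0..1}. \<phi> y \<le> \<phi> z"
    using continuous_attains_sup[of "{0..1}" \<phi>] continuous_on_subset[OF cont] by auto
  have red: "\<exists>y\<in>{0..1}. \<phi> t = \<phi> y" for t
  proof -
    have "\<phi> t = \<phi> ((t - of_int \<lfloor>t\<rfloor>) + of_int \<lfloor>t\<rfloor>)" by simp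
    also have "\<dots> = \<phi> (t - of_int \<lfloor>t\<rfloor>)" by (rule per)
    finally show ?thesis by (intro bexI[of _ "t - of_int \<lfloor>t\<rfloor>"]) (auto, linarith)
  qed
  have samesign: "\<phi> x > 0 \<or> \<phi> z < 0"
  proof (rule ccontr)
    assume "\<not> (\<phi> x > 0 \<or> \<phi> z < 0)"
    then have "\<phi> x < 0" "\<phi> z > 0" using nz by (auto simp: not_less order.order_iff_strict)
    have cc: "continuous_on {min x z..max x z} \<phi>" using continuous_on_subset[OF cont] by auto
    show False
    proof (cases "x \<le> z")
      case True
      then obtain w where "\<phi> w = 0" using IVT'[of \<phi> x 0 z] cc \<open>\<phi> x < 0\<close> \<open>\<phi> z > 0\<close> by (auto simp: min_def max_def)
      then show False using nz by auto
    next
      case False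
      then obtain w where "\<phi> w = 0" using IVT2'[of \<phi> x 0 z] cc \<open>\<phi> x < 0\<close> \<open>\<phi> z > 0\<close> by (auto simp: min_def max_def)
      then show False using nz by auto
    qed
  qed
  then show False
  proof
    assume "\<phi> x > 0"
    have "G t - t \<ge> \<phi> x" for t using red[of t] x(2) unfolding \<phi>_def by metis
    then show False using no_fixed_pos[OF gG lim \<open>\<phi> x > 0\<close>] by blast
  next
    assume "\<phi> z < 0"
    have "t - G t \<ge> - \<phi> z" for t using red[of t] z(2) unfolding \<phi>_def by force
    then show False using no_fixed_neg[OF gG lim, of "- \<phi> z"] \<open>\<phi> z < 0\<close> by simp
  qed
qed



lemma main_setup:
  fixes f :: "complex \<Rightarrow> complex"
  assumes op: "orient_pres_homeo f" and rr: "rational_rotation_number f"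
    and nc: "\<not> conj_to_rotation f"
  obtains G q where "good G" "q > 0" "\<And>m t. (f ^^ (q * m)) (pp t) = pp ((G ^^ m) t)"
    "\<exists>s. G s = s" "\<exists>x0. G x0 \<noteq> x0"
proof -
  obtain F r where lift: "is_lift F f" and sm: "strict_mono F"
    and lim: "(\<lambda>n. (F ^^ n) 0 / real n) \<longlonglongrightarrow> r" and rQ: "r \<in> \<rat>"
    using rr unfolding rational_rotation_number_def by blast
  have gF: "good F" using lift sm unfolding is_lift_def good_def by blast
  obtain p b :: int where b: "b > 0" and r: "r = of_int p / of_int b" using Rats_cases'[OF rQ] by metis
  define q where "q = nat b"
  have q: "q > 0" using b q_def by simp
  have rq: "r = of_int p / real q" using r b q_def by simp
  define G where "G t = (F ^^ q) t - of_int p" for t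
  have Gfun: "G = (\<lambda>t. (F ^^ q) t - of_int p)" unfolding G_def by blast
  have gG: "good G" unfolding Gfun by (rule good_shift[OF good_funpow[OF gF]])
  have Gp: "(G ^^ m) t = (F ^^ (q * m)) t - real m * of_int p" for m t
    unfolding Gfun by (rule Gpow[OF gF])
  have fG: "(f ^^ (q * m)) (pp t) = pp ((G ^^ m) t)" for m t
  proof -
    have "(f ^^ (q * m)) (pp t) = pp ((F ^^ (q * m)) t)"
      by (rule lift_pp_funpow) (rule lift_pp[OF lift])
    also have "\<dots> = pp ((G ^^ m) t + of_int (int m * p))" by (simp add: Gp)
    also have "\<dots> = pp ((G ^^ m) t)" by (rule pp_int)
    finally show ?thesis .
  qed
  have sq: "strict_mono (\<lambda>m. q * m)" using q by (simp add: strict_mono_def)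
  have l2: "(\<lambda>m. (F ^^ (q * m)) 0 / real (q * m)) \<longlonglongrightarrow> r"
    using LIMSEQ_subseq_LIMSEQ[OF lim sq] by (simp add: o_def)
  have l3: "(\<lambda>m. real q * ((F ^^ (q * m)) 0 / real (q * m)) - of_int p) \<longlonglongrightarrow> real q * r - of_int p"
    by (intro tendsto_intros l2)
  have "real q * r - of_int p = 0" using q rq by simp
  then have l3': "(\<lambda>m. real q * ((F ^^ (q * m)) 0 / real (q * m)) - of_int p) \<longlonglongrightarrow> 0" using l3 by simp
  have ev: "eventually (\<lambda>m. real q * ((F ^^ (q * m)) 0 / real (q * m)) - of_int p = (G ^^ m) 0 / real m) sequentially"
    using eventually_gt_at_top[of 0]
  proof eventually_elim
    case (elim m)
    then show ?case using q by (simp add: Gp field_simps)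
  qed
  have limG: "(\<lambda>m. (G ^^ m) 0 / real m) \<longlonglongrightarrow> 0"
    using Lim_transform_eventually[OF l3' ev] .
  have fixpt: "\<exists>s. G s = s" by (rule good_fixed[OF gG limG])
  have nfix: "\<exists>x0. G x0 \<noteq> x0"
  proof (rule ccontr)
    assume "\<not> (\<exists>x0. G x0 \<noteq> x0)"
    then have "(F ^^ q) t = t + of_int p" for t using G_def by (metis diff_eq_eq)
    then have "conj_to_rotation f" using conj_from_periodic[OF lift gF q] by blast
    then show False using nc by blast
  qed
  show ?thesis using that[OF gG q fG fixpt nfix] .
qed

lemma f_circle:
  assumes op: "orient_pres_homeo f"
  shows "continuous_on circle f" "f ` circle \<subseteq> circle"
  using op unfolding orient_pres_homeo_def homeomorphism_def by auto



lemma orbit: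
  assumes gG: "good G" and Ga: "G a = a" and x0: "a < x0" "x0 < a + 1" and nf: "G x0 \<noteq> x0"
  obtains orb :: "int \<Rightarrow> real" where "orb 0 = x0" "\<And>m. G (orb m) = orb (m + 1)"
    "\<And>m. a < orb m \<and> orb m < a + 1"
    "(\<forall>m. orb m < orb (m + 1)) \<or> (\<forall>m. orb (m + 1) < orb m)"
proof -
  have sm: "strict_mono G" using gG by (simp add: good_def)
  have Ga1: "G (a + 1) = a + 1" using gG Ga by (simp add: good_def)
  have cG: "continuous_on {a..a+1} G" using gG continuous_on_subset by (auto simp: good_def)
  have pre: "\<exists>t. a < t \<and> t < a + 1 \<and> G t = y" if ya: "a < y" "y < a + 1" for y
  proof -
    obtain t where t: "a \<le> t" "t \<le> a + 1" "G t = y" using IVT'[of G a y "a+1"] cG ya Ga Ga1 by auto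
    then have "t \<noteq> a" "t \<noteq> a + 1" using ya Ga Ga1 by auto
    then have "a < t" "t < a + 1" using t by auto
    then show ?thesis using t(3) by blast
  qed
  define y where "y = rec_nat x0 (\<lambda>n yn. SOME t. a < t \<and> t < a + 1 \<and> G t = yn)"
  have y0: "y 0 = x0" unfolding y_def by simp
  have ySuc: "y (Suc n) = (SOME t. a < t \<and> t < a + 1 \<and> G t = y n)" for n unfolding y_def by simp
  have step: "a < y (Suc n) \<and> y (Suc n) < a + 1 \<and> G (y (Suc n)) = y n"
    if "a < y n" "y n < a + 1" for n
  proof -
    have "\<exists>t. a < t \<and> t < a + 1 \<and> G t = y n" using pre that by blast
    then show ?thesis unfolding ySuc by (rule someI_ex)
  qed
  have yab: "a < y n \<and> y n < a + 1" for n
  proof (induction n)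
    case 0 then show ?case using y0 x0 by simp
  next
    case (Suc n) then show ?case using step[of n] by blast
  qed
  have yprop: "a < y n \<and> y n < a + 1 \<and> G (y (Suc n)) = y n" for n
    using yab[of n] step[of n] by blast
  have wprop: "a < (G ^^ n) x0 \<and> (G ^^ n) x0 < a + 1" for n
  proof (induction n)
    case (Suc n)
    then have "G a < G ((G ^^ n) x0)" "G ((G ^^ n) x0) < G (a + 1)" using sm strict_monoD by blast+
    then show ?case using Ga Ga1 by simp
  qed (use x0 in simp)
  define orb where "orb m = (if m \<ge> 0 then (G ^^ nat m) x0 else y (nat (- m)))" for m
  have o0: "orb 0 = x0" unfolding orb_def by simp
  have oG: "G (orb m) = orb (m + 1)" for m
  proof (cases "m \<ge> 0")
    case True
    then have "nat (m + 1) = Suc (nat m)" by simp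
    then show ?thesis using True unfolding orb_def by simp
  next
    case False
    show ?thesis
    proof (cases "m = -1")
      case True
      then show ?thesis unfolding orb_def using yprop[of 0] y0 by simp
    next
      case False
      then have "nat (- m) = Suc (nat (- (m + 1)))" "\<not> m + 1 \<ge> 0" using \<open>\<not> m \<ge> 0\<close> by auto
      then show ?thesis unfolding orb_def using yprop[of "nat (- (m + 1))"] \<open>\<not> m \<ge> 0\<close> by simp
    qed
  qed
  have oab: "a < orb m \<and> orb m < a + 1" for m
    unfolding orb_def using wprop yprop by simp
  have sml: "G s < G t \<longleftrightarrow> s < t" for s t using sm by (simp add: strict_mono_less)
  have up: "orb m < orb (m + 1) \<longleftrightarrow> orb (m + 1) < orb (m + 2)" for m
    using sml[of "orb m" "orb (m+1)"] oG[of m] oG[of "m+1"] by (simp add: add.assoc)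
  have dn: "orb (m + 1) < orb m \<longleftrightarrow> orb (m + 2) < orb (m + 1)" for m
    using sml[of "orb (m+1)" "orb m"] oG[of m] oG[of "m+1"] by (simp add: add.assoc)
  have mono: "(\<forall>m. orb m < orb (m + 1)) \<or> (\<forall>m. orb (m + 1) < orb m)"
  proof (cases "x0 < G x0")
    case True
    then have b: "orb 0 < orb (0 + 1)" using o0 oG[of 0] by simp
    have "orb m < orb (m + 1)" for m
    proof (induction m rule: int_induct[where k = 0])
      case base then show ?case using b by simp
    next
      case (step1 i) then show ?case using up[of i] by (simp add: add.assoc)
    next
      case (step2 i)
      have e: "i - 1 + 1 = i" "i - 1 + 2 = i + 1" by simp_all
      show ?case using up[of "i - 1"] step2(2) unfolding e by blast
    qed
    then show ?thesis by blast
  next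
    case False
    then have b: "orb (0 + 1) < orb 0" using o0 oG[of 0] nf by simp
    have "orb (m + 1) < orb m" for m
    proof (induction m rule: int_induct[where k = 0])
      case base then show ?case using b by simp
    next
      case (step1 i) then show ?case using dn[of i] by (simp add: add.assoc)
    next
      case (step2 i)
      have e: "i - 1 + 1 = i" "i - 1 + 2 = i + 1" by simp_all
      show ?case using dn[of "i - 1"] step2(2) unfolding e by blast
    qed
    then show ?thesis by blast
  qed
  show ?thesis using that[OF o0 oG oab mono] .
qed



lemma dist_circle_le2: "x \<in> circle \<Longrightarrow> y \<in> circle \<Longrightarrow> dist x y \<le> 2"
  unfolding circle_def dist_norm using norm_triangle_ineq4[of x y] by simp

lemma hd_lower:
  assumes A: "A \<subseteq> circle" and B: "B \<subseteq> circle" and w: "w \<in> A" and Bne: "B \<noteq> {}"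
    and c: "\<forall>b\<in>B. c \<le> dist w b"
  shows "c \<le> hausdorff_dist A B"
proof -
  define S where "S = {\<epsilon>. \<epsilon> > 0 \<and> A \<subseteq> nbhd B \<epsilon> \<and> B \<subseteq> nbhd A \<epsilon>}"
  have "3 \<in> S"
  proof -
    have "A \<subseteq> nbhd B 3"
    proof
      fix x assume x: "x \<in> A"
      obtain b where b: "b \<in> B" using Bne by blast
      have "infdist x B \<le> dist x b" by (rule infdist_le[OF b])
      also have "\<dots> \<le> 2" using dist_circle_le2 x b A B by blast
      finally show "x \<in> nbhd B 3" by (simp add: nbhd_def)
    qed
    moreover have "B \<subseteq> nbhd A 3"
    proof
      fix x assume x: "x \<in> B"
      have "infdist x A \<le> dist x w" by (rule infdist_le[OF w])
      also have "\<dots> \<le> 2" using dist_circle_le2 x w A B by blast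
      finally show "x \<in> nbhd A 3" by (simp add: nbhd_def)
    qed
    ultimately show ?thesis by (simp add: S_def)
  qed
  moreover have "c \<le> e" if "e \<in> S" for e
  proof -
    have "infdist w B < e" using that w by (auto simp: S_def nbhd_def)
    moreover have "c \<le> infdist w B" unfolding infdist_notempty[OF Bne]
      by (rule cINF_greatest[OF Bne]) (use c in auto)
    ultimately show ?thesis by simp
  qed
  ultimately show ?thesis unfolding hausdorff_dist_def S_def[symmetric]
    by (intro cInf_greatest) auto
qed

lemma hd_upper:
  assumes c: "c > 0" and AB: "\<forall>x\<in>A. \<exists>y\<in>B. dist x y \<le> c" and BA: "\<forall>y\<in>B. \<exists>x\<in>A. dist y x \<le> c"
  shows "hausdorff_dist A B \<le> 2 * c"
proof -
  define S where "S = {\<epsilon>. \<epsilon> > 0 \<and> A \<subseteq> nbhd B \<epsilon> \<and> B \<subseteq> nbhd A \<epsilon>}"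
  have "2 * c \<in> S"
  proof -
    have "A \<subseteq> nbhd B (2 * c)"
    proof
      fix x assume "x \<in> A"
      then obtain y where "y \<in> B" "dist x y \<le> c" using AB by blast
      then have "infdist x B \<le> c" by (rule infdist_le2)
      then show "x \<in> nbhd B (2 * c)" using c by (simp add: nbhd_def)
    qed
    moreover have "B \<subseteq> nbhd A (2 * c)"
    proof
      fix x assume "x \<in> B"
      then obtain y where "y \<in> A" "dist x y \<le> c" using BA by blast
      then have "infdist x A \<le> c" by (rule infdist_le2)
      then show "x \<in> nbhd A (2 * c)" using c by (simp add: nbhd_def)
    qed
    ultimately show ?thesis using c by (simp add: S_def)
  qed
  moreover have "bdd_below S" unfolding S_def by (rule bdd_belowI[of _ 0]) auto
  ultimately show ?thesis unfolding hausdorff_dist_def S_def[symmetric] by (rule cInf_lower)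
qed

lemma hd_self: assumes "c > 0" shows "hausdorff_dist A A \<le> c"
proof -
  have h: "\<forall>x\<in>A. \<exists>y\<in>A. dist x y \<le> c/2" using assms by (metis dist_self half_gt_zero less_imp_le)
  have "hausdorff_dist A A \<le> 2 * (c/2)" by (rule hd_upper[OF _ h h]) (use assms in simp)
  then show ?thesis by simp
qed

lemma hd_sym: "hausdorff_dist A B = hausdorff_dist B A"
  unfolding hausdorff_dist_def by (simp add: conj_ac)

lemma induced_pow: "(induced_map f ^^ k) A = (f ^^ k) ` A"
  by (induction k) (auto simp: induced_map_def image_image)

lemma dyn_ge: "k < n \<Longrightarrow> c \<le> \<rho> ((g ^^ k) x) ((g ^^ k) y) \<Longrightarrow> c \<le> dyn_dist \<rho> g n x y"
  unfolding dyn_dist_def by (subst Max_ge_iff) auto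

lemma dyn_lt: "n > 0 \<Longrightarrow> (\<And>k. k < n \<Longrightarrow> \<rho> ((g ^^ k) x) ((g ^^ k) y) < c) \<Longrightarrow> dyn_dist \<rho> g n x y < c"
  unfolding dyn_dist_def by (subst Max_less_iff) auto

lemma fpow_circle:
  assumes cont: "continuous_on circle f" and fc: "f ` circle \<subseteq> circle"
  shows "continuous_on circle (f ^^ k) \<and> (f ^^ k) ` circle \<subseteq> circle"
proof (induction k)
  case 0 then show ?case by (simp add: continuous_on_id)
next
  case (Suc k)
  then have "continuous_on circle (f \<circ> (f ^^ k))"
    by (meson cont continuous_on_compose continuous_on_subset)
  then show ?case using Suc fc by (auto simp: o_def)
qed

lemma unif_delta:
  assumes cont: "continuous_on circle f" and fc: "f ` circle \<subseteq> circle" and e: "e > 0"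
  shows "\<exists>\<delta>>0. \<forall>k<n. \<forall>x\<in>circle. \<forall>y\<in>circle. dist x y < \<delta> \<longrightarrow> dist ((f ^^ k) x) ((f ^^ k) y) < e"
proof (induction n)
  case 0 then show ?case by (intro exI[of _ 1]) auto
next
  case (Suc n)
  then obtain d1 where d1: "d1 > 0" "\<forall>k<n. \<forall>x\<in>circle. \<forall>y\<in>circle. dist x y < d1 \<longrightarrow> dist ((f ^^ k) x) ((f ^^ k) y) < e" by blast
  have "uniformly_continuous_on circle (f ^^ n)"
    using fpow_circle[OF cont fc, of n] by (intro compact_uniformly_continuous) (auto simp: circle_def)
  then obtain d2 where d2: "d2 > 0" "\<forall>x\<in>circle. \<forall>x'\<in>circle. dist x' x < d2 \<longrightarrow> dist ((f ^^ n) x') ((f ^^ n) x) < e"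
    unfolding uniformly_continuous_on_def using e by blast
  show ?case
  proof (intro exI[of _ "min d1 d2"] conjI allI impI ballI)
    show "min d1 d2 > 0" using d1 d2 by simp
    fix k x y assume k: "k < Suc n" and x: "x \<in> circle" and y: "y \<in> circle" and dxy: "dist x y < min d1 d2"
    show "dist ((f ^^ k) x) ((f ^^ k) y) < e"
    proof (cases "k < n")
      case True then show ?thesis using d1 x y dxy by auto
    next
      case False then have "k = n" using k by simp
      then show ?thesis using d2 x y dxy by auto
    qed
  qed
qed

lemma sep_bdd:
  assumes cont: "continuous_on circle f" and fc: "f ` circle \<subseteq> circle" and n: "n > 0" and e: "e > 0"
  shows "bdd_above {card E | E. separated_set C_circle hausdorff_dist (induced_map f) n e E}"
proof -
  obtain \<delta> where \<delta>: "\<delta> > 0" "\<forall>k<n. \<forall>x\<in>circle. \<forall>y\<in>circle. dist x y < \<delta> \<longrightarrow> dist ((f ^^ k) x) ((f ^^ k) y) < e/4"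
    using unif_delta[OF cont fc, of "e/4" n] e by auto
  have sc: "seq_compact circle" by (simp add: circle_def compact_imp_seq_compact)
  have "\<exists>k. finite k \<and> k \<subseteq> circle \<and> circle \<subseteq> (\<Union>x\<in>k. ball x (\<delta>/2))"
    using seq_compact_imp_totally_bounded[OF sc] \<delta>(1) half_gt_zero by blast
  then obtain N where N: "finite N" "N \<subseteq> circle" "circle \<subseteq> (\<Union>x\<in>N. ball x (\<delta>/2))"
    by blast
  define \<Phi> where "\<Phi> A = {p\<in>N. \<exists>x\<in>A. dist p x < \<delta>/2}" for A
  have "card E \<le> 2 ^ card N" if sepE: "separated_set C_circle hausdorff_dist (induced_map f) n e E" for E
  proof -
    have inj: "inj_on \<Phi> E"
    proof
      fix A B assume A: "A \<in> E" and B: "B \<in> E" and eq: "\<Phi> A = \<Phi> B"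
      show "A = B"
      proof (rule ccontr)
        assume ne: "A \<noteq> B"
        have Ac: "A \<subseteq> circle" and Bc: "B \<subseteq> circle" using sepE A B by (auto simp: separated_set_def C_circle_def)
        have close: "\<exists>y\<in>Y. dist x y < \<delta>" if cl: "X \<subseteq> circle" "\<Phi> X = \<Phi> Y" "x \<in> X" for X Y x
        proof -
          obtain p where p: "p \<in> N" "dist p x < \<delta>/2" using N(3) cl(1,3) by (auto simp: dist_commute)
          then have "p \<in> \<Phi> X" using cl(3) unfolding \<Phi>_def by blast
          then have "p \<in> \<Phi> Y" using cl(2) by simp
          then obtain y where y: "y \<in> Y" "dist p y < \<delta>/2" unfolding \<Phi>_def by blast
          have "dist x y \<le> dist p x + dist p y" by (rule dist_triangle3)
          then show ?thesis using p y by (intro bexI[of _ y]) auto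
        qed
        have "dyn_dist hausdorff_dist (induced_map f) n A B < e"
        proof (rule dyn_lt[OF n])
          fix k assume k: "k < n"
          have "hausdorff_dist ((f ^^ k) ` A) ((f ^^ k) ` B) \<le> 2 * (e/4)"
          proof (rule hd_upper)
            show "e/4 > 0" using e by simp
            show "\<forall>x\<in>(f ^^ k) ` A. \<exists>y\<in>(f ^^ k) ` B. dist x y \<le> e/4"
            proof
              fix x' assume "x' \<in> (f ^^ k) ` A"
              then obtain x where x: "x \<in> A" "x' = (f ^^ k) x" by blast
              obtain y where y: "y \<in> B" "dist x y < \<delta>" using close[OF Ac eq x(1)] by blast
              have "dist ((f ^^ k) x) ((f ^^ k) y) < e/4" using \<delta>(2) k x y Ac Bc by blast
              moreover have "(f ^^ k) y \<in> (f ^^ k) ` B" using y by blast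
              ultimately show "\<exists>y\<in>(f ^^ k) ` B. dist x' y \<le> e/4" using x by (metis less_imp_le)
            qed
            show "\<forall>x\<in>(f ^^ k) ` B. \<exists>y\<in>(f ^^ k) ` A. dist x y \<le> e/4"
            proof
              fix x' assume "x' \<in> (f ^^ k) ` B"
              then obtain x where x: "x \<in> B" "x' = (f ^^ k) x" by blast
              obtain y where y: "y \<in> A" "dist x y < \<delta>" using close[OF Bc eq[symmetric] x(1)] by blast
              have "dist ((f ^^ k) x) ((f ^^ k) y) < e/4" using \<delta>(2) k x y Ac Bc by blast
              moreover have "(f ^^ k) y \<in> (f ^^ k) ` A" using y by blast
              ultimately show "\<exists>y\<in>(f ^^ k) ` A. dist x' y \<le> e/4" using x by (metis less_imp_le)
            qed
          qed
          then show "hausdorff_dist ((induced_map f ^^ k) A) ((induced_map f ^^ k) B) < e"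
            using e by (simp add: induced_pow)
        qed
        moreover have "dyn_dist hausdorff_dist (induced_map f) n A B \<ge> e"
          using sepE A B ne unfolding separated_set_def by blast
        ultimately show False by simp
      qed
    qed
    have "\<Phi> ` E \<subseteq> Pow N" unfolding \<Phi>_def by auto
    then have "card E \<le> card (Pow N)"
      using card_inj_on_le[OF inj] N(1) by auto
    then show ?thesis using N(1) by (simp add: card_Pow)
  qed
  then show ?thesis by (intro bdd_aboveI[of _ "2 ^ card N"]) auto
qed

lemma sep_ge:
  assumes cont: "continuous_on circle f" and fc: "f ` circle \<subseteq> circle" and n: "n > 0" and e: "e > 0"
    and E: "separated_set C_circle hausdorff_dist (induced_map f) n e E"
  shows "card E \<le> sep C_circle hausdorff_dist (induced_map f) n e"
  unfolding sep_def using sep_bdd[OF cont fc n e] E by (intro cSup_upper) auto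

lemma sep_mono:
  assumes cont: "continuous_on circle f" and fc: "f ` circle \<subseteq> circle" and n: "n > 0" and e: "0 < e1" "e1 \<le> e2"
  shows "sep C_circle hausdorff_dist (induced_map f) n e2 \<le> sep C_circle hausdorff_dist (induced_map f) n e1"
  unfolding sep_def
proof (rule cSup_subset_mono)
  have "separated_set C_circle hausdorff_dist (induced_map f) n e2 {}" by (simp add: separated_set_def)
  then show "{card E |E. separated_set C_circle hausdorff_dist (induced_map f) n e2 E} \<noteq> {}" by blast
  show "bdd_above {card E |E. separated_set C_circle hausdorff_dist (induced_map f) n e1 E}"
    by (rule sep_bdd[OF cont fc n e(1)])
  show "{card E |E. separated_set C_circle hausdorff_dist (induced_map f) n e2 E}
    \<subseteq> {card E |E. separated_set C_circle hausdorff_dist (induced_map f) n e1 E}"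
  proof
    fix x assume "x \<in> {card E |E. separated_set C_circle hausdorff_dist (induced_map f) n e2 E}"
    then obtain E where "x = card E" "separated_set C_circle hausdorff_dist (induced_map f) n e2 E" by blast
    moreover have "separated_set C_circle hausdorff_dist (induced_map f) n e1 E"
      using calculation(2) e unfolding separated_set_def by (meson order_trans)
    ultimately show "x \<in> {card E |E. separated_set C_circle hausdorff_dist (induced_map f) n e1 E}" by blast
  qed
qed

lemma sep_pos:
  assumes cont: "continuous_on circle f" and fc: "f ` circle \<subseteq> circle" and n: "n > 0" and e: "e > 0"
  shows "1 \<le> sep C_circle hausdorff_dist (induced_map f) n e"
proof -
  have "{1} \<in> C_circle" by (simp add: C_circle_def circle_def)
  then have "separated_set C_circle hausdorff_dist (induced_map f) n e {{1}}" by (simp add: separated_set_def)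
  from sep_ge[OF cont fc n e this] show ?thesis by simp
qed



definition seg :: "real \<Rightarrow> real \<Rightarrow> real set" where
  "seg u v = {min u v..max u v}"

lemma sin_bound:
  assumes "0 < \<delta>" "0 < \<eta>" "\<delta> \<le> \<bar>d\<bar>" "\<bar>d\<bar> \<le> 1 - \<eta>"
  shows "min (sin (pi * \<delta>)) (sin (pi * \<eta>)) \<le> \<bar>sin (pi * d)\<bar>"
proof -
  define x where "x = \<bar>d\<bar>"
  have sx: "\<bar>sin (pi * d)\<bar> = sin (pi * x)"
  proof -
    have "\<bar>sin (pi * d)\<bar> = \<bar>sin (pi * x)\<bar>"
      unfolding x_def by (cases "d \<ge> 0") (auto simp: abs_if)
    moreover have "0 \<le> sin (pi * x)" using assms unfolding x_def by (intro sin_ge_zero) auto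
    ultimately show ?thesis by simp
  qed
  show ?thesis
  proof (cases "x \<le> 1/2")
    case True
    have p: "0 < pi" by (rule pi_gt_zero)
    have "0 < pi * \<delta>" using p assms(1) by simp
    then have "- (pi/2) \<le> pi * \<delta>" using p by linarith
    moreover have "pi * \<delta> \<le> pi * x" using p assms unfolding x_def by simp
    moreover have "pi * x \<le> pi / 2" using p True by simp
    ultimately have "sin (pi * \<delta>) \<le> sin (pi * x)" by (rule sin_monotone_2pi_le)
    then show ?thesis using sx by simp
  next
    case False
    have p: "0 < pi" by (rule pi_gt_zero)
    have "0 < pi * \<eta>" using p assms(2) by simp
    then have "- (pi/2) \<le> pi * \<eta>" using p by linarith
    moreover have "pi * \<eta> \<le> pi * (1 - x)" using p assms unfolding x_def by simp
    moreover have "pi * (1 - x) \<le> pi / 2" using p False by (simp add: algebra_simps)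
    ultimately have "sin (pi * \<eta>) \<le> sin (pi * (1 - x))" by (rule sin_monotone_2pi_le)
    also have "sin (pi * (1 - x)) = sin (pi * x)"
      using sin_pi_minus[of "pi * x"] by (simp add: algebra_simps)
    finally show ?thesis using sx by simp
  qed
qed

lemma dist_pp_bound:
  assumes "0 < \<delta>" "0 < \<eta>" "\<delta> \<le> \<bar>s - t\<bar>" "\<bar>s - t\<bar> \<le> 1 - \<eta>"
  shows "2 * min (sin (pi * \<delta>)) (sin (pi * \<eta>)) \<le> dist (pp s) (pp t)"
  using sin_bound[OF assms] dist_pp by simp

lemma good_img_Icc:
  assumes g: "good H" and xy: "x \<le> y"
  shows "H ` {x..y} = {H x..H y}"
proof
  have sm: "strict_mono H" using g by (simp add: good_def)
  then have mono: "s \<le> t \<Longrightarrow> H s \<le> H t" for s t by (simp add: strict_mono_less_eq)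
  show "H ` {x..y} \<subseteq> {H x..H y}" using mono by auto
  show "{H x..H y} \<subseteq> H ` {x..y}"
  proof
    fix z assume "z \<in> {H x..H y}"
    moreover have "continuous_on {x..y} H" using g continuous_on_subset by (auto simp: good_def)
    ultimately obtain t where "x \<le> t" "t \<le> y" "H t = z" using IVT'[of H x z y] xy by auto
    then show "z \<in> H ` {x..y}" by auto
  qed
qed

lemma good_img_seg:
  assumes g: "good H"
  shows "H ` seg u v = seg (H u) (H v)"
proof -
  have sm: "strict_mono H" using g by (simp add: good_def)
  then have mono: "s \<le> t \<longleftrightarrow> H s \<le> H t" for s t by (simp add: strict_mono_less_eq)
  have "H (min u v) = min (H u) (H v)" "H (max u v) = max (H u) (H v)"
    using mono by (auto simp: min_def max_def)
  then show ?thesis unfolding seg_def using good_img_Icc[OF g, of "min u v" "max u v"] by simp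
qed

lemma inc_mono:
  fixes orb :: "int \<Rightarrow> real"
  assumes inc: "\<forall>m. orb m < orb (m + 1)" and mn: "(m::int) \<le> n"
  shows "orb m \<le> orb n"
proof -
  have "orb m \<le> orb (m + int k)" for k
  proof (induction k)
    case (Suc k)
    have e: "m + int (Suc k) = m + int k + 1" by simp
    show ?case unfolding e using inc[rule_format, of "m + int k"] Suc by (meson less_imp_le order_trans)
  qed simp
  from this[of "nat (n - m)"] mn show ?thesis by simp
qed

lemma arc_C: "pp ` seg u v \<in> C_circle"
proof -
  have cpp: "continuous_on UNIV pp" unfolding pp_def by (intro continuous_intros)
  have c: "continuous_on (seg u v) pp" using continuous_on_subset[OF cpp] by blast
  have "compact (pp ` seg u v)" unfolding seg_def by (intro compact_continuous_image c[unfolded seg_def]) auto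
  moreover have "connected (pp ` seg u v)" unfolding seg_def by (intro connected_continuous_image c[unfolded seg_def]) auto
  moreover have "seg u v \<noteq> {}" unfolding seg_def by auto
  ultimately show ?thesis unfolding C_circle_def using pp_circle compact_imp_closed by blast
qed



lemma lower_bound:
  fixes f :: "complex \<Rightarrow> complex" and G :: "real \<Rightarrow> real" and orb :: "int \<Rightarrow> real"
  assumes cont: "continuous_on circle f" and fc: "f ` circle \<subseteq> circle"
    and gG: "good G" and q: "q > 0" and fG: "\<And>m t. (f ^^ (q * m)) (pp t) = pp ((G ^^ m) t)"
    and oG: "\<And>m. G (orb m) = orb (m + 1)"
    and oab: "\<And>m. a < orb m \<and> orb m < a + 1"
    and mono: "(\<forall>m. orb m < orb (m + 1)) \<or> (\<forall>m. orb (m + 1) < orb m)"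
  shows "\<exists>c>0. \<forall>n>0. \<forall>e. 0 < e \<and> e \<le> c \<longrightarrow>
           (n div (2 * q))^2 \<le> sep C_circle hausdorff_dist (induced_map f) n e"
proof -
  define x0 where "x0 = orb 0"
  define x1 where "x1 = orb (-1)"
  define \<delta> where "\<delta> = \<bar>x1 - x0\<bar>"
  define \<eta> where "\<eta> = min (min (x0 - a) (a + 1 - x0)) (min (x1 - a) (a + 1 - x1))"
  have x01: "x1 < x0 \<or> x0 < x1" using mono unfolding x0_def x1_def
    by (metis add.commute add.right_inverse)
  have \<delta>pos: "\<delta> > 0" using x01 unfolding \<delta>_def by auto
  have \<eta>pos: "\<eta> > 0" using oab[of 0] oab[of "-1"] unfolding \<eta>_def x0_def x1_def by simp
  have \<delta>1: "\<delta> < 1" using oab[of 0] oab[of "-1"] unfolding \<delta>_def x0_def x1_def by auto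
  have \<eta>1: "\<eta> < 1" using oab[of 0] unfolding \<eta>_def x0_def by auto
  define c where "c = 2 * min (sin (pi * \<delta>)) (sin (pi * \<eta>))"
  have cpos: "c > 0"
  proof -
    have "sin (pi * \<delta>) > 0" using \<delta>pos \<delta>1 by (intro sin_gt_zero) auto
    moreover have "sin (pi * \<eta>) > 0" using \<eta>pos \<eta>1 by (intro sin_gt_zero) auto
    ultimately show ?thesis unfolding c_def by simp
  qed
  have bound: "c \<le> dist (pp s) (pp t)" if "\<delta> \<le> \<bar>s - t\<bar>" "\<bar>s - t\<bar> \<le> 1 - \<eta>" for s t
    unfolding c_def by (rule dist_pp_bound[OF \<delta>pos \<eta>pos that])
  have Gk: "(G ^^ k) (orb m) = orb (m + int k)" for k m
  proof (induction k)
    case (Suc k)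
    then show ?case using oG[of "m + int k"] by (simp add: ac_simps)
  qed simp
  have img: "(induced_map f ^^ (q * k)) (pp ` seg u v) = pp ` seg ((G ^^ k) u) ((G ^^ k) v)" for k u v
  proof -
    have "(induced_map f ^^ (q * k)) (pp ` seg u v) = (f ^^ (q * k)) ` pp ` seg u v" by (rule induced_pow)
    also have "\<dots> = pp ` ((G ^^ k) ` seg u v)" by (simp add: image_image fG)
    also have "(G ^^ k) ` seg u v = seg ((G ^^ k) u) ((G ^^ k) v)"
      by (rule good_img_seg[OF good_funpow[OF gG]])
    finally show ?thesis .
  qed
  define arc where "arc i j = pp ` seg (orb (- int j)) (orb (- int i))" for i j :: nat
  have arcimg: "(induced_map f ^^ (q * k)) (arc i j) = pp ` seg (orb (int k - int j)) (orb (int k - int i))" for k i j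
    unfolding arc_def img Gk by (simp add: algebra_simps)
  have mle: "(orb m \<le> orb m' \<and> x1 < x0) \<or> (orb m' \<le> orb m \<and> x0 < x1)" if "m \<le> m'" for m m'
  proof (cases "\<forall>m. orb m < orb (m + 1)")
    case True
    then show ?thesis using inc_mono[OF True that] True[rule_format, of "-1"] unfolding x0_def x1_def by simp
  next
    case False
    then have dec: "\<forall>m. (\<lambda>m. - orb m) m < (\<lambda>m. - orb m) (m + 1)" using mono by auto
    show ?thesis using inc_mono[OF dec that] dec[rule_format, of "-1"] unfolding x0_def x1_def by simp
  qed
  have F1: "\<delta> \<le> \<bar>x0 - t\<bar> \<and> \<bar>x0 - t\<bar> \<le> 1 - \<eta>" if "m1 \<le> -1" "m2 \<le> -1" "t \<in> seg (orb m1) (orb m2)" for m1 m2 t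
  proof -
    have "a < orb m1" "orb m1 < a + 1" "a < orb m2" "orb m2 < a + 1" using oab by auto
    moreover have "(orb m1 \<le> x1 \<and> orb m2 \<le> x1 \<and> x1 < x0) \<or> (x1 \<le> orb m1 \<and> x1 \<le> orb m2 \<and> x0 < x1)"
      using mle[OF that(1)] mle[OF that(2)] unfolding x1_def by auto
    moreover have "a < x0" "x0 < a + 1" "a < x1" "x1 < a + 1" using oab unfolding x0_def x1_def by auto
    ultimately show ?thesis using that(3) unfolding seg_def \<delta>_def \<eta>_def by (auto simp: abs_if min_def max_def split: if_splits)
  qed
  have F2: "\<delta> \<le> \<bar>x1 - t\<bar> \<and> \<bar>x1 - t\<bar> \<le> 1 - \<eta>" if "0 \<le> m" "t \<in> seg x0 (orb m)" for m t
  proof -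
    have "a < orb m" "orb m < a + 1" using oab by auto
    moreover have "(x0 \<le> orb m \<and> x1 < x0) \<or> (orb m \<le> x0 \<and> x0 < x1)"
      using mle[OF that(1)] unfolding x0_def by auto
    moreover have "a < x0" "x0 < a + 1" "a < x1" "x1 < a + 1" using oab unfolding x0_def x1_def by auto
    ultimately show ?thesis using that(2) unfolding seg_def \<delta>_def \<eta>_def by (auto simp: abs_if min_def max_def split: if_splits)
  qed
  have F3: "x1 \<in> seg (orb m1) (orb m2)" if "m1 \<le> -1" "-1 \<le> m2" for m1 m2
    using mle[OF that(1)] mle[OF that(2)] unfolding seg_def x1_def by auto
  have segne: "pp ` seg u v \<noteq> {}" for u v unfolding seg_def by auto
  have segc: "pp ` seg u v \<subseteq> circle" for u v using pp_circle by auto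
  have caseA: "c \<le> hausdorff_dist ((induced_map f ^^ (q * i)) (arc i j)) ((induced_map f ^^ (q * i)) (arc i' j'))"
    if "i < i'" "i < j" "i < j'" for i j i' j'
  proof -
    have A: "(induced_map f ^^ (q * i)) (arc i j) = pp ` seg (orb (int i - int j)) x0"
      unfolding arcimg x0_def by simp
    have B: "(induced_map f ^^ (q * i)) (arc i' j') = pp ` seg (orb (int i - int j')) (orb (int i - int i'))"
      unfolding arcimg by simp
    show ?thesis unfolding A B
    proof (rule hd_lower[OF segc segc _ segne])
      show "pp x0 \<in> pp ` seg (orb (int i - int j)) x0" unfolding seg_def by auto
      show "\<forall>b\<in>pp ` seg (orb (int i - int j')) (orb (int i - int i')). c \<le> dist (pp x0) b"
      proof
        fix b assume "b \<in> pp ` seg (orb (int i - int j')) (orb (int i - int i'))"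
        then obtain t where t: "t \<in> seg (orb (int i - int j')) (orb (int i - int i'))" "b = pp t" by blast
        have "\<delta> \<le> \<bar>x0 - t\<bar> \<and> \<bar>x0 - t\<bar> \<le> 1 - \<eta>" using F1[OF _ _ t(1)] that by simp
        then show "c \<le> dist (pp x0) b" using bound t(2) by simp
      qed
    qed
  qed
  have caseB: "c \<le> hausdorff_dist ((induced_map f ^^ (q * j)) (arc i j')) ((induced_map f ^^ (q * j)) (arc i j))"
    if "i \<le> j" "j < j'" for i j j'
  proof -
    have A: "(induced_map f ^^ (q * j)) (arc i j) = pp ` seg x0 (orb (int j - int i))"
      unfolding arcimg x0_def by simp
    have B: "(induced_map f ^^ (q * j)) (arc i j') = pp ` seg (orb (int j - int j')) (orb (int j - int i))"
      unfolding arcimg by simp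
    show ?thesis unfolding A B
    proof (rule hd_lower[OF segc segc _ segne])
      show "pp x1 \<in> pp ` seg (orb (int j - int j')) (orb (int j - int i))"
        using F3[of "int j - int j'" "int j - int i"] that by auto
      show "\<forall>b\<in>pp ` seg x0 (orb (int j - int i)). c \<le> dist (pp x1) b"
      proof
        fix b assume "b \<in> pp ` seg x0 (orb (int j - int i))"
        then obtain t where t: "t \<in> seg x0 (orb (int j - int i))" "b = pp t" by blast
        have "\<delta> \<le> \<bar>x1 - t\<bar> \<and> \<bar>x1 - t\<bar> \<le> 1 - \<eta>" using F2[OF _ t(1)] that by simp
        then show "c \<le> dist (pp x1) b" using bound t(2) by simp
      qed
    qed
  qed
  show ?thesis
  proof (intro exI[of _ c] conjI allI impI cpos)
    fix n :: nat and e :: real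
    assume n: "n > 0" and e: "0 < e \<and> e \<le> c"
    define M where "M = n div (2 * q)"
    have M2: "2 * q * M \<le> n" unfolding M_def by (metis div_times_less_eq_dividend mult.commute)
    define P where "P = {..<M} \<times> {M..<2 * M}"
    define arc' where "arc' = (\<lambda>(i, j). arc i j)"
    have sepP: "\<exists>k<n. c \<le> hausdorff_dist ((induced_map f ^^ k) (arc' P1)) ((induced_map f ^^ k) (arc' P2))"
      if P1: "P1 \<in> P" and P2: "P2 \<in> P" and ne: "P1 \<noteq> P2" for P1 P2
    proof -
      obtain i j where ij: "P1 = (i, j)" "i < M" "M \<le> j" "j < 2 * M" using P1 unfolding P_def by auto
      obtain i' j' where ij': "P2 = (i', j')" "i' < M" "M \<le> j'" "j' < 2 * M" using P2 unfolding P_def by auto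
      have qi: "q * i < n" if "i < M" for i
      proof -
        have "q * i < q * M" using q that by simp
        also have "\<dots> \<le> 2 * q * M" by simp
        finally show ?thesis using M2 by linarith
      qed
      have qj: "q * j < n" if "j < 2 * M" for j
      proof -
        have "q * j < q * (2 * M)" using q that by simp
        also have "q * (2 * M) = 2 * q * M" by simp
        finally show ?thesis using M2 by linarith
      qed
      consider "i < i'" | "i' < i" | "i = i'" "j < j'" | "i = i'" "j' < j"
        using ne ij(1) ij'(1) by fastforce
      then show ?thesis
      proof cases
        case 1
        then show ?thesis using caseA[of i i' j j'] qi[OF ij(2)] ij ij' unfolding arc'_def
          by (intro exI[of _ "q * i"]) auto
      next
        case 2
        then show ?thesis using caseA[of i' i j' j] qi[OF ij'(2)] ij ij' hd_sym unfolding arc'_def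
          by (intro exI[of _ "q * i'"]) auto
      next
        case 3
        then show ?thesis using caseB[of i j j'] qj[OF ij(4)] ij ij' hd_sym unfolding arc'_def
          by (intro exI[of _ "q * j"]) auto
      next
        case 4
        then show ?thesis using caseB[of i j' j] qj[OF ij'(4)] ij ij' unfolding arc'_def
          by (intro exI[of _ "q * j'"]) auto
      qed
    qed
    have inj: "inj_on arc' P"
    proof
      fix P1 P2 assume P1: "P1 \<in> P" and P2: "P2 \<in> P" and eq: "arc' P1 = arc' P2"
      show "P1 = P2"
      proof (rule ccontr)
        assume "P1 \<noteq> P2"
        then obtain k where "c \<le> hausdorff_dist ((induced_map f ^^ k) (arc' P1)) ((induced_map f ^^ k) (arc' P2))"
          using sepP[OF P1 P2] by blast
        moreover have "hausdorff_dist ((induced_map f ^^ k) (arc' P1)) ((induced_map f ^^ k) (arc' P2)) \<le> c / 2"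
          unfolding eq by (rule hd_self) (use cpos in simp)
        ultimately show False using cpos by simp
      qed
    qed
    define E where "E = arc' ` P"
    have cardE: "card E = M^2" unfolding E_def using card_image[OF inj] by (simp add: P_def power2_eq_square)
    have "separated_set C_circle hausdorff_dist (induced_map f) n e E"
      unfolding separated_set_def
    proof (intro conjI ballI impI)
      show "E \<subseteq> C_circle" unfolding E_def arc'_def arc_def using arc_C by auto
      show "finite E" unfolding E_def P_def by simp
      fix A B assume A: "A \<in> E" and B: "B \<in> E" and ne: "A \<noteq> B"
      obtain P1 where P1: "P1 \<in> P" "A = arc' P1" using A unfolding E_def by blast
      obtain P2 where P2: "P2 \<in> P" "B = arc' P2" using B unfolding E_def by blast
      have "P1 \<noteq> P2" using ne P1 P2 by blast
      then obtain k where k: "k < n" "c \<le> hausdorff_dist ((induced_map f ^^ k) A) ((induced_map f ^^ k) B)"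
        using sepP[OF P1(1) P2(1)] P1 P2 by blast
      show "e \<le> dyn_dist hausdorff_dist (induced_map f) n A B"
        by (rule dyn_ge[OF k(1)]) (use k e in simp)
    qed
    from sep_ge[OF cont fc n _ this] e cardE
    show "(n div (2 * q))^2 \<le> sep C_circle hausdorff_dist (induced_map f) n e" unfolding M_def by simp
  qed
qed



lemma L_lim: "(\<lambda>n. ereal (2 - 2 * ln (4 * real q) / ln (real n))) \<longlonglongrightarrow> ereal 2"
proof -
  have lnt: "filterlim (\<lambda>n::nat. ln (real n)) at_top sequentially"
    by (rule filterlim_compose[OF ln_at_top filterlim_real_sequentially])
  have "(\<lambda>n::nat. 2 * ln (4 * real q) / ln (real n)) \<longlonglongrightarrow> 0"
    by (rule tendsto_divide_0[OF tendsto_const filterlim_at_top_imp_at_infinity[OF lnt]])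
  then have "(\<lambda>n::nat. 2 - 2 * ln (4 * real q) / ln (real n)) \<longlonglongrightarrow> 2 - 0"
    by (intro tendsto_intros)
  then have "(\<lambda>n::nat. 2 - 2 * ln (4 * real q) / ln (real n)) \<longlonglongrightarrow> 2" by simp
  then show ?thesis by (rule tendsto_ereal)
qed

lemma div_lower:
  assumes q: "q > 0" and n: "4 * q \<le> n"
  shows "real n / (4 * real q) \<le> real (n div (2 * q))"
proof -
  define d where "d = n div (2 * q)"
  have "n < 2 * q + d * (2 * q)" unfolding d_def using q by (intro dividend_less_div_times) simp
  then have "real n < real (2 * q + d * (2 * q))" by (simp only: of_nat_less_iff)
  then have "real n < (real d + 1) * (2 * real q)" by (simp add: algebra_simps)
  then have "real n / (2 * real q) < real d + 1" using q by (simp add: divide_less_eq)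
  moreover have "real n / (4 * real q) \<ge> 1" using n q by (simp add: le_divide_eq)
  moreover have "real n / (2 * real q) = 2 * (real n / (4 * real q))" by (simp add: field_simps)
  ultimately show ?thesis unfolding d_def by linarith
qed

lemma limsup_ge2:
  assumes q: "q > 0" and sepb: "\<And>n. n > 0 \<Longrightarrow> (n div (2 * q))^2 \<le> S n"
  shows "2 \<le> limsup (\<lambda>n. ereal (ln (real (S n)) / ln (real n)))"
proof -
  have ev: "eventually (\<lambda>n. ereal (2 - 2 * ln (4 * real q) / ln (real n)) \<le> ereal (ln (real (S n)) / ln (real n))) sequentially"
    using eventually_ge_at_top[of "max 2 (4 * q)"]
  proof eventually_elim
    case (elim n)
    then have n2: "n \<ge> 2" and n4: "4 * q \<le> n" by auto
    have lnpos: "ln (real n) > 0" using n2 by simp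
    have b1: "real n / (4 * real q) \<le> real (n div (2 * q))" by (rule div_lower[OF q n4])
    have b0: "0 < real n / (4 * real q)" using q n2 by simp
    have "(real n / (4 * real q))^2 \<le> (real (n div (2 * q)))^2" using b1 b0 by (intro power_mono) auto
    also have "\<dots> \<le> real (S n)"
    proof -
      have "(n div (2 * q))^2 \<le> S n" using sepb[of n] n2 by simp
      then have "real ((n div (2 * q))^2) \<le> real (S n)" by (simp only: of_nat_le_iff)
      then show ?thesis by (simp only: of_nat_power)
    qed
    finally have Sb: "(real n / (4 * real q))^2 \<le> real (S n)" .
    have "ln ((real n / (4 * real q))^2) \<le> ln (real (S n))"
    proof -
      have p0: "0 < (real n / (4 * real q))^2" using b0 by (rule zero_less_power)
      then have Spos: "0 < real (S n)" using Sb by linarith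
      show ?thesis by (rule ln_le_cancel_iff[THEN iffD2, OF p0 Spos Sb])
    qed
    moreover have "ln ((real n / (4 * real q))^2) = 2 * ln (real n) - 2 * ln (4 * real q)"
    proof -
      have "ln ((real n / (4 * real q))^2) = real 2 * ln (real n / (4 * real q))" by (rule ln_realpow)
      also have "ln (real n / (4 * real q)) = ln (real n) - ln (4 * real q)" using q n2 by (intro ln_divide_pos) auto
      finally show ?thesis by simp
    qed
    ultimately have "2 * ln (real n) - 2 * ln (4 * real q) \<le> ln (real (S n))" by simp
    then have "(2 * ln (real n) - 2 * ln (4 * real q)) / ln (real n) \<le> ln (real (S n)) / ln (real n)"
      using lnpos by (intro divide_right_mono) auto
    moreover have "(2 * ln (real n) - 2 * ln (4 * real q)) / ln (real n) = 2 - 2 * ln (4 * real q) / ln (real n)"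
      using lnpos by (simp add: diff_divide_distrib)
    ultimately show ?case by simp
  qed
  have "limsup (\<lambda>n. ereal (2 - 2 * ln (4 * real q) / ln (real n))) = ereal 2"
    by (rule lim_imp_Limsup[OF _ L_lim]) simp
  moreover have "limsup (\<lambda>n. ereal (2 - 2 * ln (4 * real q) / ln (real n))) \<le> limsup (\<lambda>n. ereal (ln (real (S n)) / ln (real n)))"
    by (rule Limsup_mono[OF ev])
  ultimately show ?thesis by simp
qed

lemma antitone_lim:
  fixes \<phi> :: "real \<Rightarrow> ereal"
  assumes anti: "\<And>e1 e2. 0 < e1 \<Longrightarrow> e1 \<le> e2 \<Longrightarrow> \<phi> e2 \<le> \<phi> e1"
  shows "(\<phi> \<longlongrightarrow> (SUP e\<in>{0<..}. \<phi> e)) (at_right 0)"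
proof (rule order_tendstoI)
  fix y assume "y < (SUP e\<in>{0<..}. \<phi> e)"
  then have "\<exists>e\<in>{0<..}. y < \<phi> e" by (simp add: less_SUP_iff)
  then obtain e where e: "e > 0" "y < \<phi> e" by auto
  show "eventually (\<lambda>x. y < \<phi> x) (at_right 0)"
    using eventually_at_right_real[OF e(1)]
  proof eventually_elim
    case (elim x)
    then show ?case using anti[of x e] e by fastforce
  qed
next
  fix y assume y: "(SUP e\<in>{0<..}. \<phi> e) < y"
  show "eventually (\<lambda>x. \<phi> x < y) (at_right 0)"
    using eventually_at_right_less[of "0::real"]
  proof eventually_elim
    case (elim x)
    then have "\<phi> x \<le> (SUP e\<in>{0<..}. \<phi> e)" by (intro SUP_upper) auto
    then show ?case using y by simp
  qed
qed



theorem proposition2: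
  fixes f :: "complex \<Rightarrow> complex"
  assumes "orient_pres_homeo f"
    and "rational_rotation_number f"
    and "\<not> conj_to_rotation f"
  shows "pol_entropy C_circle hausdorff_dist (induced_map f) \<ge> 2"
proof -
  obtain G q where gG: "good G" and q: "q > 0" and fG: "\<And>m t. (f ^^ (q * m)) (pp t) = pp ((G ^^ m) t)"
    and fx: "\<exists>s. G s = s" and nfx: "\<exists>x0. G x0 \<noteq> x0"
    using main_setup[OF assms] by blast
  have cont: "continuous_on circle f" and fc: "f ` circle \<subseteq> circle" using f_circle[OF assms(1)] by auto
  obtain s where s: "G s = s" using fx by blast
  obtain x0 where x0: "G x0 \<noteq> x0" using nfx by blast
  define a where "a = s + of_int \<lfloor>x0 - s\<rfloor>"
  have Ga: "G a = a" unfolding a_def using good_int[OF gG] s by simp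
  have "a \<le> x0" "x0 < a + 1" unfolding a_def by linarith+
  moreover have "a \<noteq> x0" using Ga x0 by auto
  ultimately have ax: "a < x0" "x0 < a + 1" by auto
  obtain orb :: "int \<Rightarrow> real" where o0: "orb 0 = x0" and oG: "\<And>m. G (orb m) = orb (m + 1)"
    and oab: "\<And>m. a < orb m \<and> orb m < a + 1"
    and mono: "(\<forall>m. orb m < orb (m + 1)) \<or> (\<forall>m. orb (m + 1) < orb m)"
    using orbit[OF gG Ga ax x0] by blast
  obtain c where cpos: "c > 0" and cb: "\<forall>n>0. \<forall>e. 0 < e \<and> e \<le> c \<longrightarrow>
           (n div (2 * q))^2 \<le> sep C_circle hausdorff_dist (induced_map f) n e"
    using lower_bound[OF cont fc gG q fG oG oab mono] by blast
  define \<phi> where "\<phi> e = limsup (\<lambda>n. ereal (ln (real (sep C_circle hausdorff_dist (induced_map f) n e)) / ln (real n)))" for e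
  have pe: "pol_entropy C_circle hausdorff_dist (induced_map f) = Lim (at_right 0) \<phi>"
    unfolding pol_entropy_def \<phi>_def by simp
  have anti: "\<phi> e2 \<le> \<phi> e1" if e: "0 < e1" "e1 \<le> e2" for e1 e2
    unfolding \<phi>_def
  proof (rule Limsup_mono)
    show "eventually (\<lambda>n. ereal (ln (real (sep C_circle hausdorff_dist (induced_map f) n e2)) / ln (real n))
        \<le> ereal (ln (real (sep C_circle hausdorff_dist (induced_map f) n e1)) / ln (real n))) sequentially"
      using eventually_gt_at_top[of "0::nat"]
    proof eventually_elim
      case (elim n)
      have le: "sep C_circle hausdorff_dist (induced_map f) n e2 \<le> sep C_circle hausdorff_dist (induced_map f) n e1"
        by (rule sep_mono[OF cont fc elim e])
      have pos: "1 \<le> sep C_circle hausdorff_dist (induced_map f) n e2"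
        using e by (intro sep_pos[OF cont fc elim]) auto
      have r1: "0 < real (sep C_circle hausdorff_dist (induced_map f) n e2)" using pos by simp
      have r2: "0 < real (sep C_circle hausdorff_dist (induced_map f) n e1)" using pos le by simp
      have "ln (real (sep C_circle hausdorff_dist (induced_map f) n e2)) \<le> ln (real (sep C_circle hausdorff_dist (induced_map f) n e1))"
        using le by (subst ln_le_cancel_iff[OF r1 r2]) simp
      moreover have "0 \<le> ln (real n)" using elim by simp
      ultimately show ?case by (simp add: divide_right_mono)
    qed
  qed
  have lim: "(\<phi> \<longlongrightarrow> (SUP e\<in>{0<..}. \<phi> e)) (at_right 0)"
    by (rule antitone_lim) (rule anti)
  have L: "Lim (at_right 0) \<phi> = (SUP e\<in>{0<..}. \<phi> e)"
    by (rule tendsto_Lim[OF _ lim]) simp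
  have "2 \<le> \<phi> c" unfolding \<phi>_def
    by (rule limsup_ge2[OF q]) (use cb cpos in auto)
  also have "\<phi> c \<le> (SUP e\<in>{0<..}. \<phi> e)" using cpos by (intro SUP_upper) auto
  finally show ?thesis unfolding pe L .
qed


end
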